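(* Let $X$ be a real normed linear space and let $x\in X\setminus\{\theta\}$ be $\varepsilon$-smooth with $\varepsilon\in[0,2)$. Suppose $y_1,y_2\in X$ satisfy $\min\{\|y_1\|,\|y_2\|\}\le\left\|\frac{y_1+y_2}{2}\right\|$. If $x\perp_B y_1$ and $x\perp_B y_2$, then $x\perp_B^{\varepsilon/2}(y_1+y_2)$.
   Context: $x\perp_B y$ means $\|x+\lambda y\|\ge\|x\|$ for all $\lambda\in\mathbb{R}$. For $\delta\in[0,1)$, $x\perp_B^\delta y$ means $\|x+\lambda y\|^2\ge\|x\|^2-2\delta\|x\|\|\lambda y\|$ for all $\lambda\in\mathbb{R}$. For $x\neq\theta$, $J(x)=\{f\in S_{X^*}:f(x)=\|x\|\}$, and $x$ is $\varepsilon$-smooth if $\sup_{f,g\in J(x)}\|f-g\|\le\varepsilon$. *)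

theory Defs
  imports "HOL-Analysis.Analysis"
begin

definition bj_orth :: "'a::real_normed_vector \<Rightarrow> 'a \<Rightarrow> bool" where
  "bj_orth x y \<longleftrightarrow> (\<forall>t::real. norm (x + t *\<^sub>R y) \<ge> norm x)"

definition bj_orth_approx :: "real \<Rightarrow> 'a::real_normed_vector \<Rightarrow> 'a \<Rightarrow> bool" where
  "bj_orth_approx \<delta> x y \<longleftrightarrow>
     (\<forall>t::real. (norm (x + t *\<^sub>R y))\<^sup>2 \<ge> (norm x)\<^sup>2 - 2 * \<delta> * norm x * norm (t *\<^sub>R y))"

definition supp_funcs :: "'a::real_normed_vector \<Rightarrow> ('a \<Rightarrow>\<^sub>L real) set" where
  "supp_funcs x = {f. norm f = 1 \<and> blinfun_apply f x = norm x}"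

definition eps_smooth :: "real \<Rightarrow> 'a::real_normed_vector \<Rightarrow> bool" where
  "eps_smooth \<epsilon> x \<longleftrightarrow> (\<forall>f\<in>supp_funcs x. \<forall>g\<in>supp_funcs x. norm (f - g) \<le> \<epsilon>)"

end

theory Submission
  imports Defs
begin

definition goodg :: "('a::real_normed_vector \<times> real) set \<Rightarrow> ('a \<times> real) set \<Rightarrow> bool" where
  "goodg G0 G \<longleftrightarrow> G0 \<subseteq> G \<and> (\<forall>v a w b. (v,a)\<in>G \<longrightarrow> (w,b)\<in>G \<longrightarrow> (v+w, a+b)\<in>G)
     \<and> (\<forall>v a c. (v,a)\<in>G \<longrightarrow> (c *\<^sub>R v, c*a)\<in>G) \<and> (\<forall>v a. (v,a)\<in>G \<longrightarrow> a \<le> norm v)"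

lemma goodg_fun:
  assumes "goodg G0 G" "(v,a)\<in>G" "(v,b)\<in>G" shows "a = b"
proof -
  have "(v + (-1) *\<^sub>R v, a + (-1)*b) \<in> G" using assms unfolding goodg_def by blast
  hence 1: "a - b \<le> 0" using assms unfolding goodg_def by fastforce
  have "(v + (-1) *\<^sub>R v, b + (-1)*a) \<in> G" using assms unfolding goodg_def by blast
  hence "b - a \<le> 0" using assms unfolding goodg_def by fastforce
  with 1 show ?thesis by simp
qed

lemma goodg_extend:
  assumes g: "goodg G0 G" and ne: "(0,0) \<in> G" and z: "z \<notin> fst ` G"
  shows "\<exists>G'. goodg G0 G' \<and> G \<subseteq> G' \<and> G' \<noteq> G"
proof -
  define S where "S = {a - norm (v - z) | v a. (v,a)\<in>G}"
  have key: "a - norm (v - z) \<le> norm (w + z) - b" if "(v,a)\<in>G" "(w,b)\<in>G" for v a w b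
  proof -
    have "(v+w, a+b) \<in> G" using g that unfolding goodg_def by blast
    hence "a + b \<le> norm (v+w)" using g unfolding goodg_def by blast
    also have "norm (v+w) \<le> norm (v - z) + norm (w + z)"
      using norm_triangle_ineq[of "v - z" "w + z"] by simp
    finally show ?thesis by simp
  qed
  have Sne: "S \<noteq> {}" using ne S_def by blast
  have Sbd: "bdd_above S" unfolding S_def bdd_above_def using key[OF _ ne] by force
  define c where "c = Sup S"
  have c1: "a - norm (v - z) \<le> c" if "(v,a)\<in>G" for v a
    unfolding c_def by (rule cSup_upper[OF _ Sbd]) (use that S_def in blast)
  have c2: "c \<le> norm (w + z) - b" if "(w,b)\<in>G" for w b
    unfolding c_def by (rule cSup_least[OF Sne]) (use key that S_def in blast)
  define G' where "G' = {(v + t *\<^sub>R z, a + t * c) | v a t. (v,a)\<in>G}"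
  have sub: "G \<subseteq> G'"
  proof
    fix p assume "p \<in> G"
    then obtain v a where "p = (v,a)" "(v,a)\<in>G" by (cases p) auto
    moreover have "(v + 0 *\<^sub>R z, a + 0 * c) \<in> G'" unfolding G'_def using \<open>(v,a)\<in>G\<close> by blast
    ultimately show "p \<in> G'" by simp
  qed
  have "(0 + 1 *\<^sub>R z, 0 + 1 * c) \<in> G'" unfolding G'_def using ne by blast
  hence zin: "(z, c) \<in> G'" by simp
  have neq: "G' \<noteq> G" using zin z by force
  have dom: "a + t * c \<le> norm (v + t *\<^sub>R z)" if "(v,a)\<in>G" for v a t
  proof (cases "t = 0")
    case True then show ?thesis using g that unfolding goodg_def by auto
  next
    case False
    show ?thesis
    proof (cases "t > 0")
      case True
      have "((1/t) *\<^sub>R v, (1/t)*a) \<in> G" using g that unfolding goodg_def by blast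
      from c2[OF this] have "c \<le> norm ((1/t) *\<^sub>R v + z) - (1/t)*a" .
      hence "t * c \<le> t * (norm ((1/t) *\<^sub>R v + z) - (1/t)*a)" using True by simp
      also have "\<dots> = norm (t *\<^sub>R ((1/t) *\<^sub>R v + z)) - a" using True
        by (simp add: right_diff_distrib)
      also have "t *\<^sub>R ((1/t) *\<^sub>R v + z) = v + t *\<^sub>R z" using True by (simp add: scaleR_add_right)
      finally show ?thesis by simp
    next
      case False
      hence tn: "t < 0" using \<open>t \<noteq> 0\<close> by simp
      define s where "s = - t"
      have sp: "s > 0" using tn s_def by simp
      have "((1/s) *\<^sub>R v, (1/s)*a) \<in> G" using g that unfolding goodg_def by blast
      from c1[OF this] have "(1/s)*a - norm ((1/s) *\<^sub>R v - z) \<le> c" .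
      hence "s * ((1/s)*a - norm ((1/s) *\<^sub>R v - z)) \<le> s * c" using sp by (simp add: mult_left_mono)
      hence "a - norm (s *\<^sub>R ((1/s) *\<^sub>R v - z)) \<le> s * c" using sp
        by (simp add: right_diff_distrib)
      also have "s *\<^sub>R ((1/s) *\<^sub>R v - z) = v + t *\<^sub>R z" using sp s_def by (simp add: scaleR_diff_right)
      finally show ?thesis using s_def by simp
    qed
  qed
  have "goodg G0 G'"
    unfolding goodg_def
  proof (intro conjI allI impI)
    show "G0 \<subseteq> G'" using sub g unfolding goodg_def by blast
  next
    fix v a w b assume "(v,a)\<in>G'" "(w,b)\<in>G'"
    then obtain v1 a1 t1 v2 a2 t2 where h: "(v1,a1)\<in>G" "(v2,a2)\<in>G" "v = v1 + t1 *\<^sub>R z" "a = a1 + t1*c"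
      "w = v2 + t2 *\<^sub>R z" "b = a2 + t2 * c" unfolding G'_def by blast
    have "(v1+v2, a1+a2) \<in> G" using g h unfolding goodg_def by blast
    moreover have "v + w = (v1+v2) + (t1+t2) *\<^sub>R z" "a + b = (a1+a2) + (t1+t2)*c"
      using h by (auto simp: algebra_simps)
    ultimately show "(v+w, a+b) \<in> G'" unfolding G'_def by blast
  next
    fix v a and r :: real assume "(v,a)\<in>G'"
    then obtain v1 a1 t1 where h: "(v1,a1)\<in>G" "v = v1 + t1 *\<^sub>R z" "a = a1 + t1*c"
      unfolding G'_def by blast
    have "(r *\<^sub>R v1, r*a1) \<in> G" using g h unfolding goodg_def by blast
    moreover have "r *\<^sub>R v = r *\<^sub>R v1 + (r*t1) *\<^sub>R z" "r * a = r*a1 + (r*t1)*c"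
      using h by (auto simp: algebra_simps)
    ultimately show "(r *\<^sub>R v, r*a) \<in> G'" unfolding G'_def by blast
  next
    fix v a assume "(v,a)\<in>G'"
    then show "a \<le> norm v" unfolding G'_def using dom by blast
  qed
  then show ?thesis using sub neq by blast
qed

lemma james:
  fixes x y :: "'a::real_normed_vector"
  assumes x: "x \<noteq> 0" and o: "bj_orth x y"
  shows "\<exists>f\<in>supp_funcs x. blinfun_apply f y = 0"
proof -
  define G0 where "G0 = {(a *\<^sub>R x + b *\<^sub>R y, a * norm x) | a b. True}"
  have g0: "goodg G0 G0"
    unfolding goodg_def
  proof (intro conjI allI impI)
    show "G0 \<subseteq> G0" by simp
  next
    fix v a w b assume "(v,a)\<in>G0" "(w,b)\<in>G0"
    then obtain a1 b1 a2 b2 where "v = a1 *\<^sub>R x + b1 *\<^sub>R y" "a = a1 * norm x"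
      "w = a2 *\<^sub>R x + b2 *\<^sub>R y" "b = a2 * norm x" unfolding G0_def by blast
    moreover have "((a1+a2) *\<^sub>R x + (b1+b2) *\<^sub>R y, (a1+a2) * norm x) \<in> G0" unfolding G0_def by blast
    ultimately show "(v+w, a+b) \<in> G0" by (simp add: algebra_simps)
  next
    fix v a and r :: real assume "(v,a)\<in>G0"
    then obtain a1 b1 where "v = a1 *\<^sub>R x + b1 *\<^sub>R y" "a = a1 * norm x" unfolding G0_def by blast
    moreover have "((r*a1) *\<^sub>R x + (r*b1) *\<^sub>R y, (r*a1) * norm x) \<in> G0" unfolding G0_def by blast
    ultimately show "(r *\<^sub>R v, r*a) \<in> G0" by (simp add: algebra_simps)
  next
    fix v a assume "(v,a)\<in>G0"
    then obtain a1 b1 where h: "v = a1 *\<^sub>R x + b1 *\<^sub>R y" "a = a1 * norm x" unfolding G0_def by blast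
    show "a \<le> norm v"
    proof (cases "a1 = 0")
      case True then show ?thesis using h by simp
    next
      case False
      have "norm x \<le> norm (x + (b1/a1) *\<^sub>R y)" using o unfolding bj_orth_def by blast
      hence "\<bar>a1\<bar> * norm x \<le> \<bar>a1\<bar> * norm (x + (b1/a1) *\<^sub>R y)" by (simp add: mult_left_mono)
      also have "\<dots> = norm (a1 *\<^sub>R (x + (b1/a1) *\<^sub>R y))" by simp
      also have "a1 *\<^sub>R (x + (b1/a1) *\<^sub>R y) = v" using h False by (simp add: scaleR_add_right)
      finally show ?thesis using h by (smt (verit) mult_right_mono norm_ge_zero)
    qed
  qed
  define A where "A = {G. goodg G0 G}"
  have "\<exists>M\<in>A. \<forall>X\<in>A. M \<subseteq> X \<longrightarrow> X = M"
  proof (rule Zorn_Lemma2, intro ballI)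
    fix C assume C: "C \<in> chains A"
    show "\<exists>U\<in>A. \<forall>X\<in>C. X \<subseteq> U"
    proof (cases "C = {}")
      case True then show ?thesis using g0 A_def by auto
    next
      case False
      have CA: "\<And>X. X \<in> C \<Longrightarrow> goodg G0 X" using C A_def unfolding chains_def by auto
      have ch: "\<And>X Y. X \<in> C \<Longrightarrow> Y \<in> C \<Longrightarrow> X \<subseteq> Y \<or> Y \<subseteq> X"
        using C unfolding chains_def chain_subset_def by blast
      have "goodg G0 (\<Union>C)"
        unfolding goodg_def
      proof (intro conjI allI impI)
        show "G0 \<subseteq> \<Union>C" using False CA unfolding goodg_def by blast
      next
        fix v a w b assume "(v,a)\<in>\<Union>C" "(w,b)\<in>\<Union>C"
        then obtain X Y where XY: "X\<in>C" "Y\<in>C" "(v,a)\<in>X" "(w,b)\<in>Y" by blast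
        show "(v+w, a+b) \<in> \<Union>C"
        proof (cases "X \<subseteq> Y")
          case True then show ?thesis using XY CA[of Y] unfolding goodg_def by blast
        next
          case False
          hence "Y \<subseteq> X" using ch XY by blast
          then show ?thesis using XY CA[of X] unfolding goodg_def by blast
        qed
      next
        fix v a and r :: real assume "(v,a)\<in>\<Union>C"
        then show "(r *\<^sub>R v, r*a) \<in> \<Union>C" using CA unfolding goodg_def by blast
      next
        fix v a assume "(v,a)\<in>\<Union>C"
        then show "a \<le> norm v" using CA unfolding goodg_def by blast
      qed
      then show ?thesis using A_def by blast
    qed
  qed
  then obtain M where M: "goodg G0 M" and maxM: "\<And>X. goodg G0 X \<Longrightarrow> M \<subseteq> X \<Longrightarrow> X = M"
    unfolding A_def by blast
  have G0M: "G0 \<subseteq> M" using M unfolding goodg_def by blast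
  have "(1 *\<^sub>R x + 0 *\<^sub>R y, 1 * norm x) \<in> G0" unfolding G0_def by blast
  hence xin: "(x, norm x) \<in> G0" by simp
  have "(0 *\<^sub>R x + 1 *\<^sub>R y, 0 * norm x) \<in> G0" unfolding G0_def by blast
  hence yin: "(y, 0) \<in> G0" by simp
  have "(0 *\<^sub>R x + 0 *\<^sub>R y, 0 * norm x) \<in> G0" unfolding G0_def by blast
  hence zin: "(0,0) \<in> G0" by simp
  have full: "\<exists>a. (v,a) \<in> M" for v
  proof (rule ccontr)
    assume "\<nexists>a. (v, a) \<in> M"
    hence "v \<notin> fst ` M" by force
    from goodg_extend[OF M _ this] zin G0M maxM show False by blast
  qed
  define g where "g v = (SOME a. (v,a) \<in> M)" for v
  have gM: "(v, g v) \<in> M" for v unfolding g_def using full someI_ex by metis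
  have geq: "(v,a) \<in> M \<Longrightarrow> g v = a" for v a using goodg_fun[OF M gM] by blast
  have gadd: "g (v + w) = g v + g w" for v w
    using M gM geq unfolding goodg_def by blast
  have gscale: "g (r *\<^sub>R v) = r * g v" for r v
    using M gM geq unfolding goodg_def by blast
  have gle: "g v \<le> norm v" for v using M gM unfolding goodg_def by blast
  have gabs: "\<bar>g v\<bar> \<le> norm v" for v
    using gle[of v] gle[of "(-1) *\<^sub>R v"] gscale[of "-1" v] by simp
  have bl: "bounded_linear g"
    by (rule bounded_linear_intro[where K=1]) (use gadd gscale gabs in auto)
  define f where "f = Blinfun g"
  have fa: "blinfun_apply f = g" unfolding f_def using bl by (simp add: bounded_linear_Blinfun_apply)
  have gx: "g x = norm x" using geq G0M xin by blast
  have gy: "g y = 0" using geq G0M yin by blast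
  have n1: "norm f \<le> 1" by (rule norm_blinfun_bound) (use fa gabs in auto)
  have "norm x \<le> norm f * norm x" using norm_blinfun[of f x] fa gx by simp
  hence "1 \<le> norm f" using x by simp
  hence "norm f = 1" using n1 by simp
  then show ?thesis unfolding supp_funcs_def using fa gx gy by auto
qed

lemma half_case:
  fixes x y1 y2 :: "'a::real_normed_vector"
  assumes f: "f \<in> supp_funcs x" and g: "g \<in> supp_funcs x"
    and fy: "blinfun_apply f y1 = 0" and gy: "blinfun_apply g y2 = 0"
    and e: "norm (f - g) \<le> \<epsilon>" and e0: "0 \<le> \<epsilon>"
    and m: "norm y1 \<le> norm ((y1 + y2) /\<^sub>R 2)"
  shows "bj_orth_approx (\<epsilon> / 2) x (y1 + y2)"
  unfolding bj_orth_approx_def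
proof
  fix t :: real
  let ?y = "y1 + y2"
  have gn: "norm g = 1" "blinfun_apply g x = norm x" using g unfolding supp_funcs_def by auto
  have "blinfun_apply g ?y = blinfun_apply (g - f) y1"
    using fy gy by (simp add: blinfun.add_right blinfun.diff_left)
  hence "\<bar>blinfun_apply g ?y\<bar> \<le> norm (g - f) * norm y1"
    using norm_blinfun[of "g - f" y1] by simp
  also have "\<dots> \<le> \<epsilon> * norm y1" using e norm_minus_commute[of g f]
    by (simp add: mult_right_mono)
  also have "\<dots> \<le> \<epsilon> * (norm ?y / 2)" using m e0 by (intro mult_left_mono) auto
  finally have b: "\<bar>blinfun_apply g ?y\<bar> \<le> (\<epsilon>/2) * norm ?y" by simp
  have "blinfun_apply g (x + t *\<^sub>R ?y) \<le> norm (x + t *\<^sub>R ?y)"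
    using norm_blinfun[of g "x + t *\<^sub>R ?y"] gn by simp
  moreover have "blinfun_apply g (x + t *\<^sub>R ?y) = norm x + t * blinfun_apply g ?y"
    using gn by (simp add: blinfun.add_right blinfun.scaleR_right)
  moreover have "\<bar>t * blinfun_apply g ?y\<bar> \<le> (\<epsilon>/2) * norm (t *\<^sub>R ?y)"
  proof -
    have "norm (t *\<^sub>R ?y) = \<bar>t\<bar> * norm ?y" by (rule norm_scaleR)
    then show ?thesis using mult_left_mono[OF b, of "\<bar>t\<bar>"] by (simp add: abs_mult mult.left_commute)
  qed
  ultimately have A: "norm x - (\<epsilon>/2) * norm (t *\<^sub>R ?y) \<le> norm (x + t *\<^sub>R ?y)" by linarith
  define N where "N = norm x"
  define c where "c = (\<epsilon>/2) * norm (t *\<^sub>R ?y)"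
  define B where "B = norm (x + t *\<^sub>R ?y)"
  have N0: "N \<ge> 0" unfolding N_def by simp
  have c0: "c \<ge> 0" unfolding c_def using e0 by (intro mult_nonneg_nonneg) auto
  have "N - c \<le> B" using A N_def c_def B_def by simp
  hence "N\<^sup>2 - 2 * N * c \<le> B\<^sup>2"
  proof (cases "N - c \<ge> 0")
    case True
    hence "(N - c)\<^sup>2 \<le> B\<^sup>2" using \<open>N - c \<le> B\<close> by (intro power_mono) auto
    moreover have "(N - c)\<^sup>2 = N\<^sup>2 - 2 * N * c + c\<^sup>2" by (simp add: power2_eq_square algebra_simps)
    moreover have "c\<^sup>2 \<ge> 0" by simp
    ultimately show ?thesis by linarith
  next
    case False
    hence "N * (N - 2*c) \<le> 0" using N0 c0 by (intro mult_nonneg_nonpos) auto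
    moreover have "N * (N - 2*c) = N\<^sup>2 - 2 * N * c" by (simp add: power2_eq_square algebra_simps)
    moreover have "B\<^sup>2 \<ge> 0" by simp
    ultimately show ?thesis by linarith
  qed
  then show "(norm (x + t *\<^sub>R ?y))\<^sup>2 \<ge> (norm x)\<^sup>2 - 2 * (\<epsilon> / 2) * norm x * norm (t *\<^sub>R ?y)"
    using N_def c_def B_def by (simp add: algebra_simps)
qed

theorem theorem4p6:
  fixes x y1 y2 :: "'a::real_normed_vector" and \<epsilon> :: real
  assumes "x \<noteq> 0"
    and "0 \<le> \<epsilon>" and "\<epsilon> < 2"
    and "eps_smooth \<epsilon> x"
    and "min (norm y1) (norm y2) \<le> norm ((y1 + y2) /\<^sub>R 2)"
    and "bj_orth x y1" and "bj_orth x y2"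
  shows "bj_orth_approx (\<epsilon> / 2) x (y1 + y2)"
proof -
  obtain f where f: "f \<in> supp_funcs x" "blinfun_apply f y1 = 0" using james assms by blast
  obtain g where g: "g \<in> supp_funcs x" "blinfun_apply g y2 = 0" using james assms by blast
  have fg: "norm (f - g) \<le> \<epsilon>" "norm (g - f) \<le> \<epsilon>" using assms(4) f g unfolding eps_smooth_def by auto
  show ?thesis
  proof (cases "norm y1 \<le> norm ((y1 + y2) /\<^sub>R 2)")
    case True then show ?thesis using half_case[OF f(1) g(1) f(2) g(2) fg(1) assms(2)] by blast
  next
    case False
    hence "norm y2 \<le> norm ((y2 + y1) /\<^sub>R 2)" using assms(5) by (simp add: add.commute)
    from half_case[OF g(1) f(1) g(2) f(2) fg(2) assms(2) this] show ?thesis by (simp add: add.commute)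
  qed
qed

end
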